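(* (Equivalence of CPL natural deduction and sequent calculus.) Fix a set $W$ of worlds with a converse well-founded accessibility relation $\prec$. For every context $\Gamma$, proposition $A$ and world $w$: $\Gamma \vdash_{\mathbf{CPL}} A[w]$ if and only if $\Gamma \Rightarrow A[w]$.
   Context: Fix a set $W$ of worlds and a binary accessibility relation $\prec$ on $W$ that is converse well-founded: there is no infinite chain $w_0 \prec w_1 \prec \cdots$. Propositions: $A,B,C ::= Q \mid \bot \mid A \supset B \mid \Diamond A \mid \Box A$, $Q$ atomic. A context $\Gamma$ is a finite collection of judgments $A[w]$ ($w \in W$). Both judgments below are defined one world at a time (provability at $w$ after provability at all worlds reachable from $w$ by one or more $\prec$-steps; well-defined by converse well-foundedness), each as the least relation closed under its rules; premises may be meta-level universal quantifications and implications. Natural deduction $\Gamma \vdash_{\mathbf{CPL}} A[w]$: (hyp) $\Gamma, A[w] \vdash A[w]$. ($\bot E$) $\Gamma \vdash \bot[w]$ implies $\Gamma \vdash C[w]$. ($\supset I$) $\Gamma, A[w] \vdash B[w]$ implies $\Gamma \vdash A \supset B[w]$. ($\supset E$) $\Gamma \vdash A \supset B[w]$ and $\Gamma \vdash A[w]$ imply $\Gamma \vdash B[w]$. ($\Diamond I$) $w \prec w'$ and $\Gamma \vdash A[w']$ imply $\Gamma \vdash \Diamond A[w]$. ($\Box I$) if $\Gamma \vdash A[w']$ for all $w'$ with $w \prec w'$ then $\Gamma \vdash \Box A[w]$. ($\Diamond E$) if $\Gamma \vdash \Diamond A[w]$ and for all $w'$ with $w\prec w'$, $\Gamma \vdash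 A[w']$ implies $\Gamma \vdash C[w]$, then $\Gamma \vdash C[w]$. ($\Box E$) if $\Gamma \vdash \Box A[w]$ and ($\Gamma \vdash A[w']$ for all $w'$ with $w \prec w'$) implies $\Gamma \vdash C[w]$, then $\Gamma \vdash C[w]$. Sequent calculus $\Gamma \Rightarrow A[w]$: (init) $\Gamma, Q[w] \Rightarrow Q[w]$ for $Q$ atomic. ($\bot L$) $\bot[w]\in\Gamma$ implies $\Gamma \Rightarrow C[w]$. ($\supset R$) $\Gamma, A[w] \Rightarrow B[w]$ implies $\Gamma \Rightarrow A \supset B[w]$. ($\supset L$) $A\supset B[w] \in \Gamma$, $\Gamma \Rightarrow A[w]$ and $\Gamma, B[w] \Rightarrow C[w]$ imply $\Gamma \Rightarrow C[w]$. ($\Diamond R$) $w\prec w'$ and $\Gamma \Rightarrow A[w']$ imply $\Gamma \Rightarrow \Diamond A[w]$. ($\Box R$) if $\Gamma \Rightarrow A[w']$ for all $w'$ with $w \prec w'$ then $\Gamma \Rightarrow \Box A[w]$. ($\Diamond L$) if $\Diamond A[w]\in\Gamma$ and for all $w'$ with $w \prec w'$, $\Gamma \Rightarrow A[w']$ implies $\Gamma \Rightarrow C[w]$, then $\Gamma \Rightarrow C[w]$. ($\Box L$) if $\Box A[w]\in\Gamma$ and ($\Gamma \Rightarrow A[w']$ for all $w'$ with $w\prec w'$) implies $\Gamma \Rightarrow C[w]$, then $\Gamma \Rightarrow C[w]$. *)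

theory Defs
  imports Main "HOL-Library.Multiset"
begin

datatype 'q form = Atom 'q | Bot | Imp "'q form" "'q form" | Dia "'q form" | Box "'q form"

text \<open>A judgment A[w] is a pair (A, w); a context is a finite multiset of judgments.\<close>
type_synonym ('q, 'w) ctx = "('q form \<times> 'w) multiset"

text \<open>Natural deduction at a single world w, given provability H at the other worlds
  (only used at worlds reachable from w by one step).\<close>
inductive nd_at :: "('w \<Rightarrow> 'w \<Rightarrow> bool) \<Rightarrow> ('w \<Rightarrow> ('q, 'w) ctx \<Rightarrow> 'q form \<Rightarrow> bool) \<Rightarrow> 'w
    \<Rightarrow> ('q, 'w) ctx \<Rightarrow> 'q form \<Rightarrow> bool"
  for R H w where
  hyp: "nd_at R H w (add_mset (A, w) \<Gamma>) A"
| botE: "nd_at R H w \<Gamma> Bot \<Longrightarrow> nd_at R H w \<Gamma> C"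
| impI: "nd_at R H w (add_mset (A, w) \<Gamma>) B \<Longrightarrow> nd_at R H w \<Gamma> (Imp A B)"
| impE: "nd_at R H w \<Gamma> (Imp A B) \<Longrightarrow> nd_at R H w \<Gamma> A \<Longrightarrow> nd_at R H w \<Gamma> B"
| diaI: "R w w' \<Longrightarrow> H w' \<Gamma> A \<Longrightarrow> nd_at R H w \<Gamma> (Dia A)"
| boxI: "(\<forall>w'. R w w' \<longrightarrow> H w' \<Gamma> A) \<Longrightarrow> nd_at R H w \<Gamma> (Box A)"
| diaE: "nd_at R H w \<Gamma> (Dia A) \<Longrightarrow> (\<forall>w'. R w w' \<longrightarrow> H w' \<Gamma> A \<longrightarrow> nd_at R H w \<Gamma> C)
         \<Longrightarrow> nd_at R H w \<Gamma> C"
| boxE: "nd_at R H w \<Gamma> (Box A) \<Longrightarrow> ((\<forall>w'. R w w' \<longrightarrow> H w' \<Gamma> A) \<longrightarrow> nd_at R H w \<Gamma> C)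
         \<Longrightarrow> nd_at R H w \<Gamma> C"

inductive sq_at :: "('w \<Rightarrow> 'w \<Rightarrow> bool) \<Rightarrow> ('w \<Rightarrow> ('q, 'w) ctx \<Rightarrow> 'q form \<Rightarrow> bool) \<Rightarrow> 'w
    \<Rightarrow> ('q, 'w) ctx \<Rightarrow> 'q form \<Rightarrow> bool"
  for R H w where
  init: "sq_at R H w (add_mset (Atom Q, w) \<Gamma>) (Atom Q)"
| botL: "(Bot, w) \<in># \<Gamma> \<Longrightarrow> sq_at R H w \<Gamma> C"
| impR: "sq_at R H w (add_mset (A, w) \<Gamma>) B \<Longrightarrow> sq_at R H w \<Gamma> (Imp A B)"
| impL: "(Imp A B, w) \<in># \<Gamma> \<Longrightarrow> sq_at R H w \<Gamma> A \<Longrightarrow> sq_at R H w (add_mset (B, w) \<Gamma>) C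
         \<Longrightarrow> sq_at R H w \<Gamma> C"
| diaR: "R w w' \<Longrightarrow> H w' \<Gamma> A \<Longrightarrow> sq_at R H w \<Gamma> (Dia A)"
| boxR: "(\<forall>w'. R w w' \<longrightarrow> H w' \<Gamma> A) \<Longrightarrow> sq_at R H w \<Gamma> (Box A)"
| diaL: "(Dia A, w) \<in># \<Gamma> \<Longrightarrow> (\<forall>w'. R w w' \<longrightarrow> H w' \<Gamma> A \<longrightarrow> sq_at R H w \<Gamma> C)
         \<Longrightarrow> sq_at R H w \<Gamma> C"
| boxL: "(Box A, w) \<in># \<Gamma> \<Longrightarrow> ((\<forall>w'. R w w' \<longrightarrow> H w' \<Gamma> A) \<longrightarrow> sq_at R H w \<Gamma> C)
         \<Longrightarrow> sq_at R H w \<Gamma> C"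

text \<open>The successor relation as a well-founded order: w' is below w iff w \<prec> w'.\<close>
definition succ_rel :: "('w \<Rightarrow> 'w \<Rightarrow> bool) \<Rightarrow> ('w \<times> 'w) set" where
  "succ_rel R = {(w', w). R w w'}"

definition ND :: "('w \<Rightarrow> 'w \<Rightarrow> bool) \<Rightarrow> ('q, 'w) ctx \<Rightarrow> 'q form \<Rightarrow> 'w \<Rightarrow> bool" where
  "ND R \<Gamma> A w = wfrec (succ_rel R) (\<lambda>H v. nd_at R H v) w \<Gamma> A"

definition SQ :: "('w \<Rightarrow> 'w \<Rightarrow> bool) \<Rightarrow> ('q, 'w) ctx \<Rightarrow> 'q form \<Rightarrow> 'w \<Rightarrow> bool" where
  "SQ R \<Gamma> A w = wfrec (succ_rel R) (\<lambda>H v. sq_at R H v) w \<Gamma> A"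

end

theory Submission
  imports Defs
begin

lemma nd_at_mono:
  assumes "nd_at R H1 w \<Gamma> A" "\<And>v. R w v \<Longrightarrow> H1 v = H2 v"
  shows "nd_at R H2 w \<Gamma> A"
  using assms(1)
proof (induction rule: nd_at.induct)
  case (diaE \<Gamma> A C) then show ?case using assms(2) by (metis nd_at.diaE)
next
  case (boxE \<Gamma> A C) then show ?case using assms(2) by (metis nd_at.boxE)
qed (auto intro: nd_at.intros simp: assms(2))

lemma sq_at_mono:
  assumes "sq_at R H1 w \<Gamma> A" "\<And>v. R w v \<Longrightarrow> H1 v = H2 v"
  shows "sq_at R H2 w \<Gamma> A"
  using assms(1)
proof (induction rule: sq_at.induct)
  case (diaL A \<Gamma> C) then show ?case using assms(2) by (metis sq_at.diaL)
next
  case (boxL A \<Gamma> C) then show ?case using assms(2) by (metis sq_at.boxL)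
qed (auto intro: sq_at.intros simp: assms(2))

lemma nd_at_cong: "(\<And>v. R w v \<Longrightarrow> H1 v = H2 v) \<Longrightarrow> nd_at R H1 w = nd_at R H2 w"
  by (intro ext iffI; erule nd_at_mono; simp)

lemma sq_at_cong: "(\<And>v. R w v \<Longrightarrow> H1 v = H2 v) \<Longrightarrow> sq_at R H1 w = sq_at R H2 w"
  by (intro ext iffI; erule sq_at_mono; simp)

lemma ND_unfold:
  assumes "wf (succ_rel R)"
  shows "ND R \<Gamma> A w = nd_at R (\<lambda>v \<Gamma> A. ND R \<Gamma> A v) w \<Gamma> A"
proof -
  have "ND R \<Gamma> A w = nd_at R (cut (wfrec (succ_rel R) (\<lambda>H v. nd_at R H v)) (succ_rel R) w) w \<Gamma> A"
    unfolding ND_def by (subst wfrec[OF assms]) simp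
  also have "nd_at R (cut (wfrec (succ_rel R) (\<lambda>H v. nd_at R H v)) (succ_rel R) w) w
     = nd_at R (\<lambda>v \<Gamma> A. ND R \<Gamma> A v) w"
    by (rule nd_at_cong) (auto simp: cut_apply succ_rel_def ND_def)
  finally show ?thesis .
qed

lemma SQ_unfold:
  assumes "wf (succ_rel R)"
  shows "SQ R \<Gamma> A w = sq_at R (\<lambda>v \<Gamma> A. SQ R \<Gamma> A v) w \<Gamma> A"
proof -
  have "SQ R \<Gamma> A w = sq_at R (cut (wfrec (succ_rel R) (\<lambda>H v. sq_at R H v)) (succ_rel R) w) w \<Gamma> A"
    unfolding SQ_def by (subst wfrec[OF assms]) simp
  also have "sq_at R (cut (wfrec (succ_rel R) (\<lambda>H v. sq_at R H v)) (succ_rel R) w) w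
     = sq_at R (\<lambda>v \<Gamma> A. SQ R \<Gamma> A v) w"
    by (rule sq_at_cong) (auto simp: cut_apply succ_rel_def SQ_def)
  finally show ?thesis .
qed

lemma nd_hyp: "(A, w) \<in># \<Gamma> \<Longrightarrow> nd_at R H w \<Gamma> A"
proof -
  assume "(A, w) \<in># \<Gamma>"
  then obtain \<Delta> where "\<Gamma> = add_mset (A, w) \<Delta>" by (rule mset_add)
  then show ?thesis by (simp add: nd_at.hyp)
qed

lemma sq_to_nd: "sq_at R H w \<Gamma> A \<Longrightarrow> nd_at R H w \<Gamma> A"
proof (induction rule: sq_at.induct)
  case (init Q \<Gamma>) then show ?case by (rule nd_at.hyp)
next
  case (botL \<Gamma> C) show ?case by (rule nd_at.botE[OF nd_hyp[OF botL]])
next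
  case (impR A \<Gamma> B) then show ?case by (intro nd_at.impI) simp
next
  case (impL A B \<Gamma> C)
  have "nd_at R H w \<Gamma> B" by (rule nd_at.impE[OF nd_hyp[OF impL(1)]]) (use impL in simp)
  moreover have "nd_at R H w \<Gamma> (Imp B C)" by (intro nd_at.impI) (use impL in simp)
  ultimately show ?case by (intro nd_at.impE[of R H w \<Gamma> B C])
next
  case (diaR w' \<Gamma> A) then show ?case by (rule nd_at.diaI)
next
  case (boxR \<Gamma> A) then show ?case by (rule nd_at.boxI)
next
  case (diaL A \<Gamma> C) show ?case
    by (rule nd_at.diaE[OF nd_hyp[OF diaL(1)]]) (use diaL(2) in blast)
next
  case (boxL A \<Gamma> C) show ?case
    by (rule nd_at.boxE[OF nd_hyp[OF boxL(1)]]) (use boxL(2) in blast)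
qed


lemma sq_init_mem: "(Atom Q, w) \<in># \<Gamma> \<Longrightarrow> sq_at R H w \<Gamma> (Atom Q)"
proof -
  assume "(Atom Q, w) \<in># \<Gamma>"
  then obtain \<Delta> where "\<Gamma> = add_mset (Atom Q, w) \<Delta>" by (rule mset_add)
  then show ?thesis by (simp add: sq_at.init)
qed

lemma sq_weaken:
  assumes "sq_at R H w \<Gamma> C" "\<And>v \<Gamma> B. R w v \<Longrightarrow> H v (add_mset d \<Gamma>) B = H v \<Gamma> B"
  shows "sq_at R H w (add_mset d \<Gamma>) C"
  using assms(1)
proof (induction rule: sq_at.induct)
  case (init Q \<Gamma>) show ?case by (rule sq_init_mem) simp
next
  case (botL \<Gamma> C) show ?case by (rule sq_at.botL) (use botL in simp)
next
  case (impR A \<Gamma> B)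
  have e: "add_mset (A,w) (add_mset d \<Gamma>) = add_mset d (add_mset (A,w) \<Gamma>)" by (rule add_mset_commute)
  show ?case by (rule sq_at.impR) (subst e, rule impR.IH)
next
  case (impL A B \<Gamma> C)
  have e: "add_mset (B,w) (add_mset d \<Gamma>) = add_mset d (add_mset (B,w) \<Gamma>)" by (rule add_mset_commute)
  show ?case by (rule sq_at.impL[of A B]) (use impL in simp, rule impL.IH, subst e, rule impL.IH)
next
  case (diaR w' \<Gamma> A) show ?case by (rule sq_at.diaR[of R w w', OF diaR(1)]) (use diaR assms(2) in simp)
next
  case (boxR \<Gamma> A) show ?case by (rule sq_at.boxR) (use boxR assms(2) in simp)
next
  case (diaL A \<Gamma> C) show ?case by (rule sq_at.diaL[of A]) (use diaL assms(2) in auto)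
next
  case (boxL A \<Gamma> C) show ?case by (rule sq_at.boxL[of A]) (use boxL assms(2) in auto)
qed

lemma sq_strengthen:
  assumes "sq_at R H w (add_mset d \<Gamma>) C" "snd d \<noteq> w"
    "\<And>v \<Gamma> B. R w v \<Longrightarrow> H v (add_mset d \<Gamma>) B = H v \<Gamma> B"
  shows "sq_at R H w \<Gamma> C"
  using assms(1)
proof (induction "add_mset d \<Gamma>" C arbitrary: \<Gamma> rule: sq_at.induct)
  case (init Q \<Gamma>' \<Gamma>)
  have "(Atom Q, w) \<in># add_mset d \<Gamma>" using init by (metis union_single_eq_member)
  then show ?case using assms(2) by (intro sq_init_mem) auto
next
  case (botL C \<Gamma>)
  then show ?case using assms(2) by (intro sq_at.botL) auto
next
  case (impR A B \<Gamma>)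
  have e: "add_mset (A,w) (add_mset d \<Gamma>) = add_mset d (add_mset (A,w) \<Gamma>)" by (rule add_mset_commute)
  show ?case by (rule sq_at.impR) (use impR e in simp)
next
  case (impL A B C \<Gamma>)
  have e: "add_mset (B,w) (add_mset d \<Gamma>) = add_mset d (add_mset (B,w) \<Gamma>)" by (rule add_mset_commute)
  have m: "(Imp A B, w) \<in># \<Gamma>" using impL assms(2) by auto
  show ?case by (rule sq_at.impL[OF m]) (use impL e in simp_all)
next
  case (diaR w' A \<Gamma>) show ?case by (rule sq_at.diaR[of R w w', OF diaR(1)]) (use diaR assms(3) in simp)
next
  case (boxR A \<Gamma>) show ?case by (rule sq_at.boxR) (use boxR assms(3) in simp)
next
  case (diaL A C \<Gamma>)
  have m: "(Dia A, w) \<in># \<Gamma>" using diaL assms(2) by auto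
  show ?case by (rule sq_at.diaL[OF m]) (use diaL assms(3) in auto)
next
  case (boxL A C \<Gamma>)
  have m: "(Box A, w) \<in># \<Gamma>" using boxL assms(2) by auto
  show ?case by (rule sq_at.boxL[OF m]) (use boxL assms(3) in auto)
qed


lemma sq_id: "(A, w) \<in># \<Gamma> \<Longrightarrow> sq_at R H w \<Gamma> A"
proof (induction A arbitrary: \<Gamma>)
  case (Atom Q) then show ?case by (rule sq_init_mem)
next
  case Bot then show ?case by (rule sq_at.botL)
next
  case (Imp P Q)
  have "sq_at R H w (add_mset (P, w) \<Gamma>) Q"
    by (rule sq_at.impL[of P Q]) (use Imp in simp_all)
  then show ?case by (rule sq_at.impR)
next
  case (Dia B)
  show ?case by (rule sq_at.diaL[OF Dia(2)]) (auto intro: sq_at.diaR)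
next
  case (Box B)
  show ?case by (rule sq_at.boxL[OF Box(2)]) (auto intro: sq_at.boxR)
qed

lemma sq_bot:
  fixes C :: "'q form"
  shows "sq_at R H w \<Gamma> (Bot :: 'q form) \<Longrightarrow> sq_at R H w \<Gamma> C"
proof (induction \<Gamma> "Bot :: 'q form" rule: sq_at.induct)
  case (botL \<Gamma>) then show ?case by (rule sq_at.botL)
next
  case (impL A B \<Gamma>) show ?case by (rule sq_at.impL[OF impL(1,2,5)])
next
  case (diaL A \<Gamma>) show ?case by (rule sq_at.diaL[OF diaL(1)]) (use diaL(2) in blast)
next
  case (boxL A \<Gamma>) show ?case by (rule sq_at.boxL[OF boxL(1)]) (use boxL(2) in blast)
qed

lemma sq_impinv:
  assumes "sq_at R H w \<Gamma> (Imp P Q)"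
    and I: "\<And>v D \<Gamma> B. R w v \<Longrightarrow> H v (add_mset (D, w) \<Gamma>) B = H v \<Gamma> B"
  shows "sq_at R H w (add_mset (P, w) \<Gamma>) Q"
  using assms(1)
proof (induction \<Gamma> "Imp P Q" rule: sq_at.induct)
  case (botL \<Gamma>) then show ?case by (intro sq_at.botL) simp
next
  case (impR \<Gamma>) then show ?case by simp
next
  case (impL A B \<Gamma>)
  have e: "add_mset (B,w) (add_mset (P,w) \<Gamma>) = add_mset (P,w) (add_mset (B,w) \<Gamma>)" by (rule add_mset_commute)
  have m: "(Imp A B, w) \<in># add_mset (P,w) \<Gamma>" using impL(1) by simp
  have l: "sq_at R H w (add_mset (P,w) \<Gamma>) A"
    using sq_weaken[OF impL(2), of "(P,w)"] I by blast
  have r: "sq_at R H w (add_mset (B,w) (add_mset (P,w) \<Gamma>)) Q"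
    by (subst e) (rule impL(5))
  show ?case by (rule sq_at.impL[OF m l r])
next
  case (diaL A \<Gamma>)
  show ?case by (rule sq_at.diaL[of A]) (use diaL I in auto)
next
  case (boxL A \<Gamma>)
  show ?case by (rule sq_at.boxL[of A]) (use boxL I in auto)
qed

lemma sq_diainv:
  assumes "sq_at R H w \<Gamma> (Dia B)"
    and I: "\<And>v D \<Gamma> B. R w v \<Longrightarrow> H v (add_mset (D, w) \<Gamma>) B = H v \<Gamma> B"
    and K: "\<forall>w'. R w w' \<longrightarrow> H w' \<Gamma> B \<longrightarrow> sq_at R H w \<Gamma> C"
  shows "sq_at R H w \<Gamma> C"
  using assms(1) K
proof (induction \<Gamma> "Dia B" rule: sq_at.induct)
  case (botL \<Gamma>) then show ?case by (intro sq_at.botL) simp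
next
  case (diaR w' \<Gamma>) then show ?case by simp
next
  case (impL A B' \<Gamma>)
  have "\<forall>w'. R w w' \<longrightarrow> H w' (add_mset (B', w) \<Gamma>) B \<longrightarrow> sq_at R H w (add_mset (B', w) \<Gamma>) C"
    using impL(6) I sq_weaken[of R H w _ C "(B', w)"] by simp
  then show ?case by (intro sq_at.impL[OF impL(1,2)] impL(5))
next
  case (diaL A \<Gamma>)
  show ?case by (rule sq_at.diaL[of A]) (use diaL in auto)
next
  case (boxL A \<Gamma>)
  show ?case by (rule sq_at.boxL[of A]) (use boxL in auto)
qed

lemma sq_boxinv:
  assumes "sq_at R H w \<Gamma> (Box B)"
    and I: "\<And>v D \<Gamma> B. R w v \<Longrightarrow> H v (add_mset (D, w) \<Gamma>) B = H v \<Gamma> B"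
    and K: "(\<forall>w'. R w w' \<longrightarrow> H w' \<Gamma> B) \<longrightarrow> sq_at R H w \<Gamma> C"
  shows "sq_at R H w \<Gamma> C"
  using assms(1) K
proof (induction \<Gamma> "Box B" rule: sq_at.induct)
  case (botL \<Gamma>) then show ?case by (intro sq_at.botL) simp
next
  case (boxR \<Gamma>) then show ?case by simp
next
  case (impL A B' \<Gamma>)
  have "(\<forall>w'. R w w' \<longrightarrow> H w' (add_mset (B', w) \<Gamma>) B) \<longrightarrow> sq_at R H w (add_mset (B', w) \<Gamma>) C"
    using impL(6) I sq_weaken[of R H w _ C "(B', w)"] by simp
  then show ?case by (intro sq_at.impL[OF impL(1,2)] impL(5))
next
  case (diaL A \<Gamma>)
  show ?case by (rule sq_at.diaL[of A]) (use diaL in auto)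
next
  case (boxL A \<Gamma>)
  show ?case by (rule sq_at.boxL[of A]) (use boxL in auto)
qed


lemma sq_cut_step:
  assumes I: "\<And>v D \<Gamma> B. R w v \<Longrightarrow> H v (add_mset (D, w) \<Gamma>) B = H v \<Gamma> B"
  and IHP: "\<And>P Q \<Gamma> C. A = Imp P Q \<Longrightarrow> sq_at R H w \<Gamma> P \<Longrightarrow> sq_at R H w (add_mset (P,w) \<Gamma>) C \<Longrightarrow> sq_at R H w \<Gamma> C"
  and IHQ: "\<And>P Q \<Gamma> C. A = Imp P Q \<Longrightarrow> sq_at R H w \<Gamma> Q \<Longrightarrow> sq_at R H w (add_mset (Q,w) \<Gamma>) C \<Longrightarrow> sq_at R H w \<Gamma> C"
  and D: "sq_at R H w \<Gamma>' C"
  shows "\<Gamma>' = add_mset (A,w) \<Gamma> \<Longrightarrow> sq_at R H w \<Gamma> A \<Longrightarrow> sq_at R H w \<Gamma> C"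
  using D
proof (induction arbitrary: \<Gamma> rule: sq_at.induct)
  case (init Q \<Delta> \<Gamma>)
  note e = init.prems(1) and a = init.prems(2)
  show ?case
  proof -
    have "(Atom Q, w) \<in># add_mset (Atom Q, w) \<Delta>" by simp
    then have "(Atom Q, w) \<in># add_mset (A, w) \<Gamma>" by (simp only: e)
    then have "A = Atom Q \<or> (Atom Q, w) \<in># \<Gamma>" by auto
    then show "sq_at R H w \<Gamma> (Atom Q)"
    proof
      assume "A = Atom Q" then show ?thesis using a by simp
    qed (rule sq_init_mem)
  qed
next
  case (botL \<Delta> C \<Gamma>)
  note e = botL.prems(1) and a = botL.prems(2)
  show ?case
  proof -
    have "A = Bot \<or> (Bot, w) \<in># \<Gamma>" using botL e by auto
    then show "sq_at R H w \<Gamma> C"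
    proof
      assume "A = Bot" then show ?thesis using a by (simp add: sq_bot)
    qed (rule sq_at.botL)
  qed
next
  case (impR A1 \<Delta> B \<Gamma>)
  note e = impR.prems(1) and a = impR.prems(2)
  show ?case
  proof -
    have e2: "add_mset (A1, w) \<Delta> = add_mset (A, w) (add_mset (A1, w) \<Gamma>)"
      using e by (simp add: add_mset_commute)
    have a2: "sq_at R H w (add_mset (A1, w) \<Gamma>) A"
      using sq_weaken[OF a, of "(A1,w)"] I by blast
    have "sq_at R H w (add_mset (A1, w) \<Gamma>) B" using impR.IH e2 a2 by blast
    then show "sq_at R H w \<Gamma> (Imp A1 B)" by (rule sq_at.impR)
  qed
next
  case (impL P Q \<Delta> C \<Gamma>)
  note e = impL.prems(1) and a = impL.prems(2)
  show ?case
  proof -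
    have e2: "add_mset (Q, w) \<Delta> = add_mset (A, w) (add_mset (Q, w) \<Gamma>)"
      using e by (simp add: add_mset_commute)
    have a2: "sq_at R H w (add_mset (Q, w) \<Gamma>) A"
      using sq_weaken[OF a, of "(Q,w)"] I by blast
    have l: "sq_at R H w \<Gamma> P" using impL.IH(1) e a by blast
    have r: "sq_at R H w (add_mset (Q, w) \<Gamma>) C" using impL.IH(2) e2 a2 by blast
    have "A = Imp P Q \<or> (Imp P Q, w) \<in># \<Gamma>" using impL(1) e by auto
    then show "sq_at R H w \<Gamma> C"
    proof
      assume "(Imp P Q, w) \<in># \<Gamma>" then show ?thesis by (rule sq_at.impL[OF _ l r])
    next
      assume A: "A = Imp P Q"
      have "sq_at R H w (add_mset (P, w) \<Gamma>) Q" using sq_impinv[of R H w \<Gamma> P Q] a A I by blast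
      then have "sq_at R H w \<Gamma> Q" using IHP[OF A l] by blast
      then show ?thesis using IHQ[OF A _ r] by blast
    qed
  qed
next
  case (diaR w' \<Delta> B \<Gamma>)
  note e = diaR.prems(1) and a = diaR.prems(2)
  show ?case
  proof -
    have "H w' \<Gamma> B" using diaR I e by simp
    then show "sq_at R H w \<Gamma> (Dia B)" by (rule sq_at.diaR[of R w w', OF diaR(1)])
  qed
next
  case (boxR \<Delta> B \<Gamma>)
  note e = boxR.prems(1) and a = boxR.prems(2)
  show ?case
  proof -
    have "\<forall>w'. R w w' \<longrightarrow> H w' \<Gamma> B" using boxR I e by simp
    then show "sq_at R H w \<Gamma> (Box B)" by (rule sq_at.boxR)
  qed
next
  case (diaL B \<Delta> C \<Gamma>)
  note e = diaL.prems(1) and a = diaL.prems(2)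
  show ?case
  proof -
    have K: "\<forall>w'. R w w' \<longrightarrow> H w' \<Gamma> B \<longrightarrow> sq_at R H w \<Gamma> C" using diaL(2) I e a by simp
    have "A = Dia B \<or> (Dia B, w) \<in># \<Gamma>" using diaL(1) e by auto
    then show "sq_at R H w \<Gamma> C"
    proof
      assume "(Dia B, w) \<in># \<Gamma>" then show ?thesis using K by (rule sq_at.diaL)
    next
      assume "A = Dia B" then show ?thesis using sq_diainv[of R H w \<Gamma> B C] a I K by blast
    qed
  qed
next
  case (boxL B \<Delta> C \<Gamma>)
  note e = boxL.prems(1) and a = boxL.prems(2)
  show ?case
  proof -
    have K: "(\<forall>w'. R w w' \<longrightarrow> H w' \<Gamma> B) \<longrightarrow> sq_at R H w \<Gamma> C" using boxL(2) I e a by simp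
    have "A = Box B \<or> (Box B, w) \<in># \<Gamma>" using boxL(1) e by auto
    then show "sq_at R H w \<Gamma> C"
    proof
      assume "(Box B, w) \<in># \<Gamma>" then show ?thesis using K by (rule sq_at.boxL)
    next
      assume "A = Box B" then show ?thesis using sq_boxinv[of R H w \<Gamma> B C] a I K by blast
    qed
  qed
qed

lemma sq_cut:
  assumes I: "\<And>v D \<Gamma> B. R w v \<Longrightarrow> H v (add_mset (D, w) \<Gamma>) B = H v \<Gamma> B"
  shows "sq_at R H w \<Gamma> A \<Longrightarrow> sq_at R H w (add_mset (A,w) \<Gamma>) C \<Longrightarrow> sq_at R H w \<Gamma> C"
proof (induction A arbitrary: \<Gamma> C)
  case (Imp P Q)
  note S = sq_cut_step[where R=R and H=H and w=w and A="Imp P Q" and \<Gamma>'="add_mset (Imp P Q, w) \<Gamma>" and \<Gamma>=\<Gamma> and C=C]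
  show ?case
    apply (rule S)
         apply (rule I, assumption)
        apply (rule Imp.IH(1), simp, simp)
       apply (rule Imp.IH(2), simp, simp)
      apply (rule Imp.prems(2))
     apply (rule refl)
    apply (rule Imp.prems(1))
    done
next
  case (Atom Q')
  note S = sq_cut_step[where R=R and H=H and w=w and A="Atom Q'" and \<Gamma>'="add_mset (Atom Q', w) \<Gamma>" and \<Gamma>=\<Gamma> and C=C]
  show ?case
    apply (rule S)
         apply (rule I, assumption)
        apply simp
       apply simp
      apply (rule Atom.prems(2))
     apply (rule refl)
    apply (rule Atom.prems(1))
    done
next
  case (Bot)
  note S = sq_cut_step[where R=R and H=H and w=w and A="Bot" and \<Gamma>'="add_mset (Bot, w) \<Gamma>" and \<Gamma>=\<Gamma> and C=C]
  show ?case
    apply (rule S)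
         apply (rule I, assumption)
        apply simp
       apply simp
      apply (rule Bot.prems(2))
     apply (rule refl)
    apply (rule Bot.prems(1))
    done
next
  case (Dia B')
  note S = sq_cut_step[where R=R and H=H and w=w and A="Dia B'" and \<Gamma>'="add_mset (Dia B', w) \<Gamma>" and \<Gamma>=\<Gamma> and C=C]
  show ?case
    apply (rule S)
         apply (rule I, assumption)
        apply simp
       apply simp
      apply (rule Dia.prems(2))
     apply (rule refl)
    apply (rule Dia.prems(1))
    done
next
  case (Box B')
  note S = sq_cut_step[where R=R and H=H and w=w and A="Box B'" and \<Gamma>'="add_mset (Box B', w) \<Gamma>" and \<Gamma>=\<Gamma> and C=C]
  show ?case
    apply (rule S)
         apply (rule I, assumption)
        apply simp
       apply simp
      apply (rule Box.prems(2))
     apply (rule refl)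
    apply (rule Box.prems(1))
    done
qed


lemma nd_to_sq:
  assumes I: "\<And>v D \<Gamma> B. R w v \<Longrightarrow> H v (add_mset (D, w) \<Gamma>) B = H v \<Gamma> B"
  shows "nd_at R H w \<Gamma> A \<Longrightarrow> sq_at R H w \<Gamma> A"
proof (induction rule: nd_at.induct)
  case (hyp A \<Gamma>) show ?case by (rule sq_id) simp
next
  case (botE \<Gamma> C) show ?case by (rule sq_bot[OF botE.IH])
next
  case (impI A \<Gamma> B) show ?case by (rule sq_at.impR[OF impI.IH])
next
  case (impE \<Gamma> A B)
  show ?case by (rule sq_cut[OF I impE.IH(2) sq_impinv[OF impE.IH(1) I]])
next
  case (diaI w' \<Gamma> A) show ?case by (rule sq_at.diaR[of R w w' H \<Gamma> A, OF diaI(1,2)])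
next
  case (boxI \<Gamma> A) show ?case by (rule sq_at.boxR[of R w H \<Gamma> A, OF boxI])
next
  case (diaE \<Gamma> A C)
  have K: "\<forall>w'. R w w' \<longrightarrow> H w' \<Gamma> A \<longrightarrow> sq_at R H w \<Gamma> C" using diaE(3) by blast
  show ?case by (rule sq_diainv[OF diaE.IH(1) I K])
next
  case (boxE \<Gamma> A C)
  have K: "(\<forall>w'. R w w' \<longrightarrow> H w' \<Gamma> A) \<longrightarrow> sq_at R H w \<Gamma> C" using boxE(3) by blast
  show ?case by (rule sq_boxinv[OF boxE.IH(1) I K])
qed

lemma SQ_indep:
  assumes wf: "wf (succ_rel R)"
  shows "(u, v) \<notin> (succ_rel R)\<^sup>* \<Longrightarrow> SQ R (add_mset (D,u) \<Gamma>) B v = SQ R \<Gamma> B v"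
proof (induction v arbitrary: \<Gamma> B rule: wf_induct_rule[OF wf])
  case (1 v \<Gamma> B)
  have uv: "snd (D, u) \<noteq> v" using 1(2) by auto
  have Hi: "\<And>v' \<Gamma> B. R v v' \<Longrightarrow> SQ R (add_mset (D,u) \<Gamma>) B v' = SQ R \<Gamma> B v'"
  proof -
    fix v' \<Gamma> B assume "R v v'"
    then have s: "(v', v) \<in> succ_rel R" by (simp add: succ_rel_def)
    have "(u, v') \<notin> (succ_rel R)\<^sup>*"
    proof
      assume "(u, v') \<in> (succ_rel R)\<^sup>*"
      then have "(u, v) \<in> (succ_rel R)\<^sup>*" using s by (rule rtrancl_into_rtrancl)
      then show False using 1(2) by simp
    qed
    then show "SQ R (add_mset (D,u) \<Gamma>) B v' = SQ R \<Gamma> B v'" using 1(1)[OF s] by blast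
  qed
  have e1: "SQ R (add_mset (D,u) \<Gamma>) B v = sq_at R (\<lambda>v \<Gamma> A. SQ R \<Gamma> A v) v (add_mset (D,u) \<Gamma>) B"
    by (rule SQ_unfold[OF wf])
  have e2: "SQ R \<Gamma> B v = sq_at R (\<lambda>v \<Gamma> A. SQ R \<Gamma> A v) v \<Gamma> B"
    by (rule SQ_unfold[OF wf])
  show ?case unfolding e1 e2
  proof
    assume "sq_at R (\<lambda>v \<Gamma> A. SQ R \<Gamma> A v) v (add_mset (D, u) \<Gamma>) B"
    then show "sq_at R (\<lambda>v \<Gamma> A. SQ R \<Gamma> A v) v \<Gamma> B"
      by (rule sq_strengthen[OF _ uv]) (simp add: Hi)
  next
    assume "sq_at R (\<lambda>v \<Gamma> A. SQ R \<Gamma> A v) v \<Gamma> B"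
    then show "sq_at R (\<lambda>v \<Gamma> A. SQ R \<Gamma> A v) v (add_mset (D, u) \<Gamma>) B"
      by (rule sq_weaken) (simp add: Hi)
  qed
qed

theorem theorem3:
  fixes R :: "'w \<Rightarrow> 'w \<Rightarrow> bool"
  assumes "wf (succ_rel R)"
  shows "ND R \<Gamma> A w \<longleftrightarrow> SQ R \<Gamma> A w"
proof (induction w arbitrary: \<Gamma> A rule: wf_induct_rule[OF assms])
  case (1 w \<Gamma> A)
  have cong: "\<And>v. R w v \<Longrightarrow> (\<lambda>(\<Gamma>::('a,'w) ctx) (A::'a form). ND R \<Gamma> A v) = (\<lambda>(\<Gamma>::('a,'w) ctx) (A::'a form). SQ R \<Gamma> A v)"
  proof -
    fix v assume "R w v"
    then have s: "(v, w) \<in> succ_rel R" by (simp add: succ_rel_def)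
    show "(\<lambda>(\<Gamma>::('a,'w) ctx) (A::'a form). ND R \<Gamma> A v) = (\<lambda>(\<Gamma>::('a,'w) ctx) (A::'a form). SQ R \<Gamma> A v)" using 1[OF s] by (intro ext) simp
  qed
  have I: "\<And>v D \<Gamma> B. R w v \<Longrightarrow> SQ R (add_mset (D, w) \<Gamma>) B v = SQ R \<Gamma> B v"
  proof -
    fix v D \<Gamma> B assume "R w v"
    then have s: "(v, w) \<in> succ_rel R" by (simp add: succ_rel_def)
    have "(w, v) \<notin> (succ_rel R)\<^sup>*"
    proof
      assume "(w, v) \<in> (succ_rel R)\<^sup>*"
      then have "(w, w) \<in> (succ_rel R)\<^sup>+" using s by (rule rtrancl_into_trancl1)
      then show False using wf_acyclic[OF assms] by (simp add: acyclic_def)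
    qed
    then show "SQ R (add_mset (D, w) \<Gamma>) B v = SQ R \<Gamma> B v" by (rule SQ_indep[OF assms])
  qed
  have "ND R \<Gamma> A w = nd_at R (\<lambda>v (\<Gamma>::('a,'w) ctx) (A::'a form). ND R \<Gamma> A v) w \<Gamma> A" by (rule ND_unfold[OF assms])
  also have "\<dots> = nd_at R (\<lambda>v (\<Gamma>::('a,'w) ctx) (A::'a form). SQ R \<Gamma> A v) w \<Gamma> A"
    using nd_at_cong[of R w "\<lambda>v (\<Gamma>::('a,'w) ctx) (A::'a form). ND R \<Gamma> A v" "\<lambda>v (\<Gamma>::('a,'w) ctx) (A::'a form). SQ R \<Gamma> A v"] cong by simp
  also have "\<dots> = sq_at R (\<lambda>v (\<Gamma>::('a,'w) ctx) (A::'a form). SQ R \<Gamma> A v) w \<Gamma> A"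
  proof
    assume "nd_at R (\<lambda>v (\<Gamma>::('a,'w) ctx) (A::'a form). SQ R \<Gamma> A v) w \<Gamma> A"
    then show "sq_at R (\<lambda>v (\<Gamma>::('a,'w) ctx) (A::'a form). SQ R \<Gamma> A v) w \<Gamma> A"
      by (rule nd_to_sq[rotated]) (simp add: I)
  next
    assume "sq_at R (\<lambda>v (\<Gamma>::('a,'w) ctx) (A::'a form). SQ R \<Gamma> A v) w \<Gamma> A"
    then show "nd_at R (\<lambda>v (\<Gamma>::('a,'w) ctx) (A::'a form). SQ R \<Gamma> A v) w \<Gamma> A" by (rule sq_to_nd)
  qed
  also have "\<dots> = SQ R \<Gamma> A w" by (rule SQ_unfold[OF assms, symmetric])
  finally show ?case .
qed

end
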